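(* Let $X$ be a real Banach space. Then: (1) if $A\subseteq B\subseteq X$ then $\mathbf E(A)\le\mathbf E(B)$ and $\mathbf E_0(A)\le\mathbf E_0(B)$; (2) for every $A\subseteq X$, $\mathbf E_0(A)\ge\mathbf E(A)\ge\sup_{x\in A}\|x\|$; (3) if $K_{\mathcal B,\mathcal E}$ is a compact brick in $X$ then $\mathbf E(K_{\mathcal B,\mathcal E})=\sup_{x\in K_{\mathcal B,\mathcal E}}\|x\|$; (4) if $K_{\mathcal B,\mathcal E}$ is a compact brick in $X$ with $\mathcal B$ a $1$-unconditional basis, then $\mathbf E_0(K_{\mathcal B,\mathcal E})=\sup_{x\in K_{\mathcal B,\mathcal E}}\|x\|$.
   Context: A brick in $X$ is a set $K_{\mathcal B,\mathcal E}=\{x\in X:\ |e_n^*(x)|\le\varepsilon_n\ \forall n\}$, where $\mathcal B=(e_n)$ is a normalized Schauder basis of $X$ with biorthogonal functionals $(e_n^* )$ and $\mathcal E=(\varepsilon_n)$ is a sequence of nonnegative numbers. Its unconditional radius is $r^{\rm unc}(K_{\mathcal B,\mathcal E})=\sup_{\theta_n=\pm1}\|\sum_n\theta_n\varepsilon_ne_n\|$ (norm of a divergent series $=\infty$). The entropy of $A\subseteq X$ is $\mathbf E(A)=\inf\{r^{\rm unc}(K_{\mathcal B,\mathcal E}): A\subseteq K_{\mathcal B,\mathcal E}\}$, and the unconditional entropy $\mathbf E_0(A)$ is the same infimum restricted to bricks with $\mathcal B$ a $1$-unconditional basis (i.e. $\|\sum_n\theta_ne_n^*(x)e_n\|\le\|x\|$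 for all $x$ and all signs $\theta_n=\pm1$); the infimum of an empty set (or of only infinite values) is $\infty$. *)

theory Defs
  imports "HOL-Analysis.Analysis"
begin

definition schauder_basis :: "(nat \<Rightarrow> 'a::banach) \<Rightarrow> bool" where
  "schauder_basis e \<longleftrightarrow> (\<forall>x. \<exists>!c. (\<lambda>n. c n *\<^sub>R e n) sums x)"

definition normalized_schauder_basis :: "(nat \<Rightarrow> 'a::banach) \<Rightarrow> bool" where
  "normalized_schauder_basis e \<longleftrightarrow> schauder_basis e \<and> (\<forall>n. norm (e n) = 1)"

definition coord :: "(nat \<Rightarrow> 'a::banach) \<Rightarrow> nat \<Rightarrow> 'a \<Rightarrow> real" where
  "coord e n x = (THE c. (\<lambda>k. c k *\<^sub>R e k) sums x) n"

definition one_unconditional :: "(nat \<Rightarrow> 'a::banach) \<Rightarrow> bool" where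
  "one_unconditional e \<longleftrightarrow>
     (\<forall>x \<theta>. (\<forall>n. \<theta> n = 1 \<or> \<theta> n = -1) \<longrightarrow>
        summable (\<lambda>n. (\<theta> n * coord e n x) *\<^sub>R e n) \<and>
        norm (\<Sum>n. (\<theta> n * coord e n x) *\<^sub>R e n) \<le> norm x)"

definition brick :: "(nat \<Rightarrow> 'a::banach) \<Rightarrow> (nat \<Rightarrow> real) \<Rightarrow> 'a set" where
  "brick e \<epsilon> = {x. \<forall>n. \<bar>coord e n x\<bar> \<le> \<epsilon> n}"

definition r_unc :: "(nat \<Rightarrow> 'a::banach) \<Rightarrow> (nat \<Rightarrow> real) \<Rightarrow> ennreal" where
  "r_unc e \<epsilon> = (SUP \<theta> \<in> {\<theta>. \<forall>n. \<theta> n = 1 \<or> \<theta> n = -1}.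
      if summable (\<lambda>n. (\<theta> n * \<epsilon> n) *\<^sub>R e n)
      then ennreal (norm (\<Sum>n. (\<theta> n * \<epsilon> n) *\<^sub>R e n)) else \<infinity>)"

definition entropy :: "'a::banach set \<Rightarrow> ennreal" where
  "entropy A = (INF p \<in> {(e, \<epsilon>). normalized_schauder_basis e \<and> (\<forall>n. \<epsilon> n \<ge> 0)
                    \<and> A \<subseteq> brick e \<epsilon>}. r_unc (fst p) (snd p))"

definition unc_entropy :: "'a::banach set \<Rightarrow> ennreal" where
  "unc_entropy A = (INF p \<in> {(e, \<epsilon>). normalized_schauder_basis e \<and> one_unconditional e
                    \<and> (\<forall>n. \<epsilon> n \<ge> 0) \<and> A \<subseteq> brick e \<epsilon>}. r_unc (fst p) (snd p))"

end

theory Submission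
  imports Defs
begin


lemma coord_sums:
  assumes "schauder_basis e"
  shows "(\<lambda>n. coord e n x *\<^sub>R e n) sums x"
proof -
  from assms have "\<exists>!c. (\<lambda>n. c n *\<^sub>R e n) sums x" by (simp add: schauder_basis_def)
  then have "(\<lambda>n. (THE c. (\<lambda>k. c k *\<^sub>R e k) sums x) n *\<^sub>R e n) sums x"
    by (rule theI') 
  then show ?thesis by (simp add: coord_def)
qed

lemma coord_eq:
  assumes "schauder_basis e" "(\<lambda>n. c n *\<^sub>R e n) sums x"
  shows "coord e n x = c n"
proof -
  from assms(1) have "\<exists>!c. (\<lambda>n. c n *\<^sub>R e n) sums x" by (simp add: schauder_basis_def)
  then have "(THE c. (\<lambda>k. c k *\<^sub>R e k) sums x) = c"
    using assms(2) the1_equality[of "\<lambda>c. (\<lambda>n. c n *\<^sub>R e n) sums x"] by blast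
  then show ?thesis by (simp add: coord_def)
qed

lemma coord_finite:
  assumes "schauder_basis e" "finite S"
  shows "coord e n (\<Sum>k\<in>S. c k *\<^sub>R e k) = (if n \<in> S then c n else 0)"
proof -
  have "(\<lambda>n. (if n \<in> S then c n else 0) *\<^sub>R e n) sums (\<Sum>k\<in>S. (if k \<in> S then c k else 0) *\<^sub>R e k)"
    by (rule sums_finite[OF assms(2)]) auto
  also have "(\<Sum>k\<in>S. (if k \<in> S then c k else 0) *\<^sub>R e k) = (\<Sum>k\<in>S. c k *\<^sub>R e k)"
    by (rule sum.cong) auto
  finally show ?thesis using coord_eq[OF assms(1), of "\<lambda>n. (if n \<in> S then c n else 0)"] by simp
qed

lemma brick_finite:
  assumes "schauder_basis e" "finite S" "\<And>n. n \<in> S \<Longrightarrow> \<bar>t n\<bar> \<le> \<epsilon> n" "\<And>n. \<epsilon> n \<ge> 0"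
  shows "(\<Sum>k\<in>S. t k *\<^sub>R e k) \<in> brick e \<epsilon>"
  using assms by (auto simp: brick_def coord_finite)



lemma sign_partial_bound:
  fixes e :: "nat \<Rightarrow> 'a::banach"
  assumes H: "\<And>\<theta>. (\<forall>n. \<theta> n = 1 \<or> \<theta> n = -1) \<Longrightarrow> summable (\<lambda>n. (\<theta> n * \<epsilon> n) *\<^sub>R e n) \<and> norm (\<Sum>n. (\<theta> n * \<epsilon> n) *\<^sub>R e n) \<le> R"
    and th: "\<forall>n<N. \<theta> n = 1 \<or> \<theta> n = -1"
  shows "norm (\<Sum>n<N. (\<theta> n * \<epsilon> n) *\<^sub>R e n) \<le> R"
proof -
  define t1 where "t1 n = (if n < N then \<theta> n else 1)" for n
  define t2 where "t2 n = (if n < N then \<theta> n else -1)" for n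
  have s1: "\<forall>n. t1 n = 1 \<or> t1 n = -1" "\<forall>n. t2 n = 1 \<or> t2 n = -1" using th by (auto simp: t1_def t2_def)
  note h1 = H[OF s1(1)] and h2 = H[OF s1(2)]
  have a: "(\<lambda>n. (t1 n * \<epsilon> n) *\<^sub>R e n + (t2 n * \<epsilon> n) *\<^sub>R e n) sums
      ((\<Sum>n. (t1 n * \<epsilon> n) *\<^sub>R e n) + (\<Sum>n. (t2 n * \<epsilon> n) *\<^sub>R e n))"
    using h1 h2 by (intro sums_add summable_sums) auto
  have b: "(\<lambda>n. (t1 n * \<epsilon> n) *\<^sub>R e n + (t2 n * \<epsilon> n) *\<^sub>R e n) sums
      (\<Sum>n\<in>{..<N}. (t1 n * \<epsilon> n) *\<^sub>R e n + (t2 n * \<epsilon> n) *\<^sub>R e n)"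
    by (rule sums_finite) (simp_all add: t1_def t2_def)
  have c: "(\<Sum>n\<in>{..<N}. (t1 n * \<epsilon> n) *\<^sub>R e n + (t2 n * \<epsilon> n) *\<^sub>R e n)
      = 2 *\<^sub>R (\<Sum>n<N. (\<theta> n * \<epsilon> n) *\<^sub>R e n)"
  proof -
    have "(\<Sum>n\<in>{..<N}. (t1 n * \<epsilon> n) *\<^sub>R e n + (t2 n * \<epsilon> n) *\<^sub>R e n)
        = (\<Sum>n\<in>{..<N}. (\<theta> n * \<epsilon> n) *\<^sub>R e n + (\<theta> n * \<epsilon> n) *\<^sub>R e n)"
      by (rule sum.cong) (simp_all add: t1_def t2_def)
    also have "\<dots> = 2 *\<^sub>R (\<Sum>n<N. (\<theta> n * \<epsilon> n) *\<^sub>R e n)"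
      by (simp only: sum.distrib scaleR_2)
    finally show ?thesis .
  qed
  have "2 *\<^sub>R (\<Sum>n<N. (\<theta> n * \<epsilon> n) *\<^sub>R e n) = ((\<Sum>n. (t1 n * \<epsilon> n) *\<^sub>R e n) + (\<Sum>n. (t2 n * \<epsilon> n) *\<^sub>R e n))"
    using sums_unique2[OF b a] c by simp
  then have "2 * norm (\<Sum>n<N. (\<theta> n * \<epsilon> n) *\<^sub>R e n) \<le> norm (\<Sum>n. (t1 n * \<epsilon> n) *\<^sub>R e n) + norm (\<Sum>n. (t2 n * \<epsilon> n) *\<^sub>R e n)"
    using norm_triangle_ineq[of "\<Sum>n. (t1 n * \<epsilon> n) *\<^sub>R e n" "\<Sum>n. (t2 n * \<epsilon> n) *\<^sub>R e n"]
    by (metis norm_scaleR abs_numeral)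
  then show ?thesis using h1 h2 by linarith
qed

lemma convex_partial_bound:
  fixes e :: "nat \<Rightarrow> 'a::banach"
  assumes H: "\<And>\<theta>. (\<forall>n. \<theta> n = 1 \<or> \<theta> n = -1) \<Longrightarrow> summable (\<lambda>n. (\<theta> n * \<epsilon> n) *\<^sub>R e n) \<and> norm (\<Sum>n. (\<theta> n * \<epsilon> n) *\<^sub>R e n) \<le> R"
  shows "\<forall>t. (\<forall>n<N. \<bar>t n\<bar> \<le> 1) \<and> (\<forall>n. k \<le> n \<and> n < N \<longrightarrow> t n = 1 \<or> t n = -1) \<longrightarrow>
     norm (\<Sum>n<N. (t n * \<epsilon> n) *\<^sub>R e n) \<le> R"
proof (induction k)
  case 0
  show ?case
  proof (intro allI impI)
    fix t :: "nat \<Rightarrow> real" assume "(\<forall>n<N. \<bar>t n\<bar> \<le> 1) \<and> (\<forall>n. 0 \<le> n \<and> n < N \<longrightarrow> t n = 1 \<or> t n = -1)"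
    then have "\<forall>n<N. t n = 1 \<or> t n = -1" by simp
    then show "norm (\<Sum>n<N. (t n * \<epsilon> n) *\<^sub>R e n) \<le> R"
      using sign_partial_bound[of \<epsilon> e R N t] H by blast
  qed
next
  case (Suc k)
  show ?case
  proof (intro allI impI)
    fix t :: "nat \<Rightarrow> real" assume t: "(\<forall>n<N. \<bar>t n\<bar> \<le> 1) \<and> (\<forall>n. Suc k \<le> n \<and> n < N \<longrightarrow> t n = 1 \<or> t n = -1)"
    show "norm (\<Sum>n<N. (t n * \<epsilon> n) *\<^sub>R e n) \<le> R"
    proof (cases "k < N")
      case False
      then have "\<forall>n. k \<le> n \<and> n < N \<longrightarrow> t n = 1 \<or> t n = -1" by auto
      then show ?thesis using Suc.IH t by blast
    next
      case True
      define tp where "tp = t(k := 1)"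
      define tm where "tm = t(k := -1)"
      define l where "l = (1 + t k) / 2"
      have l: "0 \<le> l" "l \<le> 1" using t True by (auto simp: l_def abs_le_iff)
      have p: "norm (\<Sum>n<N. (tp n * \<epsilon> n) *\<^sub>R e n) \<le> R"
        apply (rule Suc.IH[rule_format])
        using t by (auto simp: tp_def le_Suc_eq)
      have m: "norm (\<Sum>n<N. (tm n * \<epsilon> n) *\<^sub>R e n) \<le> R"
        apply (rule Suc.IH[rule_format])
        using t by (auto simp: tm_def le_Suc_eq)
      have eq: "(\<Sum>n<N. (t n * \<epsilon> n) *\<^sub>R e n) = l *\<^sub>R (\<Sum>n<N. (tp n * \<epsilon> n) *\<^sub>R e n) + (1 - l) *\<^sub>R (\<Sum>n<N. (tm n * \<epsilon> n) *\<^sub>R e n)"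
        unfolding scaleR_sum_right sum.distrib[symmetric]
      proof (rule sum.cong)
        fix n assume "n \<in> {..<N}"
        have "l *\<^sub>R ((tp n * \<epsilon> n) *\<^sub>R e n) + (1 - l) *\<^sub>R ((tm n * \<epsilon> n) *\<^sub>R e n)
            = (l * (tp n * \<epsilon> n) + (1 - l) * (tm n * \<epsilon> n)) *\<^sub>R e n"
          by (simp add: scaleR_left_distrib)
        also have "l * (tp n * \<epsilon> n) + (1 - l) * (tm n * \<epsilon> n) = t n * \<epsilon> n"
          by (cases "n = k") (auto simp: tp_def tm_def l_def field_simps)
        finally show "(t n * \<epsilon> n) *\<^sub>R e n = l *\<^sub>R ((tp n * \<epsilon> n) *\<^sub>R e n) + (1 - l) *\<^sub>R ((tm n * \<epsilon> n) *\<^sub>R e n)"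
          by (rule sym)
      qed simp
      have "norm (\<Sum>n<N. (t n * \<epsilon> n) *\<^sub>R e n) \<le> l * norm (\<Sum>n<N. (tp n * \<epsilon> n) *\<^sub>R e n) + (1 - l) * norm (\<Sum>n<N. (tm n * \<epsilon> n) *\<^sub>R e n)"
        unfolding eq using l norm_triangle_ineq[of "l *\<^sub>R (\<Sum>n<N. (tp n * \<epsilon> n) *\<^sub>R e n)" "(1 - l) *\<^sub>R (\<Sum>n<N. (tm n * \<epsilon> n) *\<^sub>R e n)"]
        by simp
      also have "\<dots> \<le> l * R + (1 - l) * R"
        using l p m by (intro add_mono mult_left_mono) auto
      finally show ?thesis by (simp add: algebra_simps)
    qed
  qed
qed



lemma compact_summable:
  fixes e :: "nat \<Rightarrow> 'a::banach"
  assumes sb: "schauder_basis e" and eps: "\<forall>n. \<epsilon> n \<ge> 0" and K: "compact (brick e \<epsilon>)"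
    and th: "\<forall>n. \<bar>\<theta> n\<bar> \<le> 1"
  shows "summable (\<lambda>n. (\<theta> n * \<epsilon> n) *\<^sub>R e n)"
proof (rule ccontr)
  define f where "f = (\<lambda>n. (\<theta> n * \<epsilon> n) *\<^sub>R e n)"
  have fin: "sum f S \<in> brick e \<epsilon>" if "finite S" for S
    unfolding f_def
  proof (rule brick_finite[OF sb that])
    fix n show "\<bar>\<theta> n * \<epsilon> n\<bar> \<le> \<epsilon> n"
      using th eps by (simp add: abs_mult mult_left_le_one_le)
    show "0 \<le> \<epsilon> n" using eps by simp
  qed
  assume "\<not> summable (\<lambda>n. (\<theta> n * \<epsilon> n) *\<^sub>R e n)"
  then have "\<not> summable f" by (simp add: f_def)
  then obtain \<delta> where \<delta>: "\<delta> > 0" "\<forall>N. \<exists>m\<ge>N. \<exists>n. \<delta> \<le> norm (sum f {m..<n})"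
    unfolding summable_Cauchy by (auto simp: not_less)
  then obtain mm nn where mn: "\<And>N. mm N \<ge> N \<and> \<delta> \<le> norm (sum f {mm N..<nn N})" by metis
  have lt: "mm N < nn N" for N
  proof (rule ccontr)
    assume "\<not> mm N < nn N"
    then have "{mm N..<nn N} = {}" by auto
    then show False using mn[of N] \<delta>(1) by simp
  qed
  define P where "P = rec_nat 0 (\<lambda>_ p. nn p)"
  have PS: "P (Suc k) = nn (P k)" for k by (simp add: P_def)
  have PB: "P k \<le> mm (P k)" "mm (P k) < P (Suc k)" for k
    using mn[of "P k"] lt[of "P k"] PS[of k] by auto
  have smP: "strict_mono P"
    by (rule strict_monoI_Suc) (metis PB le_less_trans)
  define B where "B k = {mm (P k)..<P (Suc k)}" for k
  have disj: "B k \<inter> B k' = {}" if "k < k'" for k k'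
  proof -
    have "P (Suc k) \<le> P k'" using smP that by (simp add: strict_mono_less_eq)
    then have "P (Suc k) \<le> mm (P k')" using PB(1)[of k'] by linarith
    then show ?thesis by (auto simp: B_def)
  qed
  define b where "b k = sum f (B k)" for k
  have bK: "b k \<in> brick e \<epsilon>" for k unfolding b_def B_def by (rule fin) simp
  have bn: "\<delta> \<le> norm (b k)" for k
    using mn[of "P k"] by (simp add: b_def B_def PS)
  obtain z r where r: "strict_mono r" and lim: "(b \<circ> r) \<longlonglongrightarrow> z"
    using compact_imp_seq_compact[OF K] bK unfolding seq_compact_def by metis
  have zn: "\<delta> \<le> norm z"
    by (rule LIMSEQ_le_const[OF tendsto_norm[OF lim]]) (auto simp: bn)
  obtain K0 where K0: "\<And>k. k \<ge> K0 \<Longrightarrow> norm ((b \<circ> r) k - z) < \<delta>/2"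
    using lim \<delta>(1) unfolding LIMSEQ_iff by (metis half_gt_zero)
  obtain R where R: "\<And>x. x \<in> brick e \<epsilon> \<Longrightarrow> norm x \<le> R"
    using compact_imp_bounded[OF K] unfolding bounded_iff by blast
  obtain m :: nat where m: "R < real m * (\<delta>/2)"
    using ex_less_of_nat_mult[of "\<delta>/2" R] \<delta>(1) by auto
  define J where "J = {K0..<K0+m}"
  have cJ: "card J = m" by (simp add: J_def)
  define v where "v = (\<Sum>j\<in>J. b (r j))"
  have "v = sum f (\<Union>j\<in>J. B (r j))"
    unfolding v_def b_def
  proof (rule sum.UNION_disjoint[symmetric])
    show "finite J" by (simp add: J_def)
    show "\<forall>i\<in>J. finite (B (r i))" by (simp add: B_def)
    show "\<forall>i\<in>J. \<forall>j\<in>J. i \<noteq> j \<longrightarrow> B (r i) \<inter> B (r j) = {}"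
    proof (intro ballI impI)
      fix i j :: nat assume "i \<noteq> j"
      then have "r i \<noteq> r j" using r by (metis strict_mono_eq)
      then show "B (r i) \<inter> B (r j) = {}"
        using disj[of "r i" "r j"] disj[of "r j" "r i"] by (cases "r i < r j") auto
    qed
  qed
  then have "v \<in> brick e \<epsilon>" by (auto intro!: fin simp: J_def B_def)
  then have vR: "norm v \<le> R" by (rule R)
  have v2: "v = (\<Sum>j\<in>J. z) + (\<Sum>j\<in>J. b (r j) - z)"
    by (simp add: v_def sum.distrib[symmetric])
  have w: "norm (\<Sum>j\<in>J. b (r j) - z) \<le> real m * (\<delta>/2)"
  proof -
    have "norm (\<Sum>j\<in>J. b (r j) - z) \<le> (\<Sum>j\<in>J. norm (b (r j) - z))" by (rule norm_sum)
    also have "\<dots> \<le> (\<Sum>j\<in>J. \<delta>/2)"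
      by (rule sum_mono) (use K0 in \<open>fastforce simp: J_def\<close>)
    finally show ?thesis using cJ by simp
  qed
  have zz: "norm (\<Sum>j\<in>J. z) = real m * norm z" using cJ by (simp add: sum_constant_scaleR)
  have "norm (\<Sum>j\<in>J. z) \<le> norm v + norm (\<Sum>j\<in>J. b (r j) - z)"
    using norm_triangle_ineq4[of v "\<Sum>j\<in>J. b (r j) - z"] v2 by simp
  then have "real m * \<delta> \<le> R + real m * (\<delta>/2)"
    using zz w vR zn mult_left_mono[OF zn, of "real m"] by linarith
  then show False using m by linarith
qed

lemma norm_le_r_unc:
  fixes e :: "nat \<Rightarrow> 'a::banach"
  assumes sb: "schauder_basis e" and x: "x \<in> brick e \<epsilon>"
  shows "ennreal (norm x) \<le> r_unc e \<epsilon>"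
proof (cases "r_unc e \<epsilon> = \<infinity>")
  case True then show ?thesis by simp
next
  case False
  define R where "R = enn2real (r_unc e \<epsilon>)"
  have rR: "r_unc e \<epsilon> = ennreal R" using False by (simp add: R_def ennreal_enn2real_if)
  have R0: "R \<ge> 0" by (simp add: R_def)
  have H: "summable (\<lambda>n. (\<theta> n * \<epsilon> n) *\<^sub>R e n) \<and> norm (\<Sum>n. (\<theta> n * \<epsilon> n) *\<^sub>R e n) \<le> R"
    if th: "\<forall>n. \<theta> n = 1 \<or> \<theta> n = -1" for \<theta>
  proof -
    have le: "(if summable (\<lambda>n. (\<theta> n * \<epsilon> n) *\<^sub>R e n)
      then ennreal (norm (\<Sum>n. (\<theta> n * \<epsilon> n) *\<^sub>R e n)) else \<infinity>) \<le> r_unc e \<epsilon>"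
      unfolding r_unc_def by (rule SUP_upper) (use th in simp)
    show ?thesis
    proof (cases "summable (\<lambda>n. (\<theta> n * \<epsilon> n) *\<^sub>R e n)")
      case True
      then have "ennreal (norm (\<Sum>n. (\<theta> n * \<epsilon> n) *\<^sub>R e n)) \<le> ennreal R" using le rR by simp
      then show ?thesis using True R0 by (simp add: ennreal_le_iff)
    next
      case False
      then show ?thesis using le False \<open>r_unc e \<epsilon> \<noteq> \<infinity>\<close> by (simp add: top_unique)
    qed
  qed
  define c where "c n = coord e n x" for n
  have cb: "\<bar>c n\<bar> \<le> \<epsilon> n" for n using x by (simp add: brick_def c_def)
  define t where "t n = (if \<epsilon> n = 0 then 0 else c n / \<epsilon> n)" for n
  have t1: "\<bar>t n\<bar> \<le> 1" for n
  proof (cases "\<epsilon> n = 0")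
    case False
    then have "\<epsilon> n > 0" using cb[of n] by linarith
    then show ?thesis using cb[of n] by (simp add: t_def abs_divide divide_le_eq_1)
  qed (simp add: t_def)
  have tc: "t n * \<epsilon> n = c n" for n
    using cb[of n] by (auto simp: t_def)
  have ps: "norm (\<Sum>n<N. c n *\<^sub>R e n) \<le> R" for N
  proof -
    have "\<forall>t. (\<forall>n<N. \<bar>t n\<bar> \<le> 1) \<and> (\<forall>n. N \<le> n \<and> n < N \<longrightarrow> t n = 1 \<or> t n = -1) \<longrightarrow>
     norm (\<Sum>n<N. (t n * \<epsilon> n) *\<^sub>R e n) \<le> R"
      by (rule convex_partial_bound) (use H in blast)
    then have "norm (\<Sum>n<N. (t n * \<epsilon> n) *\<^sub>R e n) \<le> R" using t1 by auto
    then show ?thesis by (simp add: tc)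
  qed
  have "(\<lambda>n. c n *\<^sub>R e n) sums x" unfolding c_def by (rule coord_sums[OF sb])
  then have "(\<lambda>N. \<Sum>n<N. c n *\<^sub>R e n) \<longlonglongrightarrow> x" by (simp add: sums_def)
  then have "norm x \<le> R"
    by (rule LIMSEQ_le_const2[OF tendsto_norm]) (use ps in auto)
  then show ?thesis using rR by (simp add: ennreal_leI)
qed

lemma r_unc_le_sup:
  fixes e :: "nat \<Rightarrow> 'a::banach"
  assumes sb: "schauder_basis e" and eps: "\<forall>n. \<epsilon> n \<ge> 0" and K: "compact (brick e \<epsilon>)"
  shows "r_unc e \<epsilon> \<le> (SUP x\<in>brick e \<epsilon>. ennreal (norm x))"
  unfolding r_unc_def
proof (rule SUP_least)
  fix \<theta> :: "nat \<Rightarrow> real" assume "\<theta> \<in> {\<theta>. \<forall>n. \<theta> n = 1 \<or> \<theta> n = -1}"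
  then have th: "\<forall>n. \<theta> n = 1 \<or> \<theta> n = -1" by simp
  have th1: "\<forall>n. \<bar>\<theta> n\<bar> \<le> 1"
  proof
    fix n show "\<bar>\<theta> n\<bar> \<le> 1" using th[rule_format, of n] by auto
  qed
  have s: "summable (\<lambda>n. (\<theta> n * \<epsilon> n) *\<^sub>R e n)"
    by (rule compact_summable[OF sb eps K th1])
  have "(\<Sum>n. (\<theta> n * \<epsilon> n) *\<^sub>R e n) \<in> brick e \<epsilon>"
    unfolding brick_def
  proof (intro CollectI allI)
    fix n
    have "coord e n (\<Sum>n. (\<theta> n * \<epsilon> n) *\<^sub>R e n) = \<theta> n * \<epsilon> n"
      by (rule coord_eq[OF sb summable_sums[OF s]])
    then show "\<bar>coord e n (\<Sum>n. (\<theta> n * \<epsilon> n) *\<^sub>R e n)\<bar> \<le> \<epsilon> n"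
      using th[rule_format, of n] eps by (auto simp: abs_mult)
  qed
  then show "(if summable (\<lambda>n. (\<theta> n * \<epsilon> n) *\<^sub>R e n)
      then ennreal (norm (\<Sum>n. (\<theta> n * \<epsilon> n) *\<^sub>R e n)) else \<infinity>) \<le> (SUP x\<in>brick e \<epsilon>. ennreal (norm x))"
    using s by (auto intro!: SUP_upper)
qed

lemma entropy_ge_sup:
  fixes A :: "'a::banach set"
  shows "entropy A \<ge> (SUP x \<in> A. ennreal (norm x))"
  unfolding entropy_def
proof (rule INF_greatest)
  fix p assume "p \<in> {(e, \<epsilon>). normalized_schauder_basis e \<and> (\<forall>n. \<epsilon> n \<ge> 0) \<and> A \<subseteq> brick e \<epsilon>}"
  then obtain e \<epsilon> where p: "p = (e, \<epsilon>)" "normalized_schauder_basis e" "A \<subseteq> brick e \<epsilon>" by auto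
  show "(SUP x \<in> A. ennreal (norm x)) \<le> r_unc (fst p) (snd p)"
  proof (rule SUP_least)
    fix x assume "x \<in> A"
    then show "ennreal (norm x) \<le> r_unc (fst p) (snd p)"
      using p norm_le_r_unc[of e x \<epsilon>] by (auto simp: normalized_schauder_basis_def)
  qed
qed

theorem proposition4p2:
  fixes X_type :: "'a::banach itself"
  shows "(\<forall>A B :: 'a set. A \<subseteq> B \<longrightarrow> entropy A \<le> entropy B \<and> unc_entropy A \<le> unc_entropy B)
    \<and> (\<forall>A :: 'a set. unc_entropy A \<ge> entropy A \<and> entropy A \<ge> (SUP x \<in> A. ennreal (norm x)))
    \<and> (\<forall>(e :: nat \<Rightarrow> 'a) \<epsilon>. normalized_schauder_basis e \<and> (\<forall>n. \<epsilon> n \<ge> 0)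
         \<and> compact (brick e \<epsilon>)
         \<longrightarrow> entropy (brick e \<epsilon>) = (SUP x \<in> brick e \<epsilon>. ennreal (norm x)))
    \<and> (\<forall>(e :: nat \<Rightarrow> 'a) \<epsilon>. normalized_schauder_basis e \<and> one_unconditional e
         \<and> (\<forall>n. \<epsilon> n \<ge> 0) \<and> compact (brick e \<epsilon>)
         \<longrightarrow> unc_entropy (brick e \<epsilon>) = (SUP x \<in> brick e \<epsilon>. ennreal (norm x)))"
proof (intro conjI allI impI)
  fix A B :: "'a set" assume "A \<subseteq> B"
  then show "entropy A \<le> entropy B"
    unfolding entropy_def by (intro INF_superset_mono) auto
  show "unc_entropy A \<le> unc_entropy B"
    using \<open>A \<subseteq> B\<close> unfolding unc_entropy_def by (intro INF_superset_mono) auto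
next
  fix A :: "'a set"
  show "entropy A \<le> unc_entropy A"
    unfolding entropy_def unc_entropy_def by (intro INF_superset_mono) auto
  show "(SUP x \<in> A. ennreal (norm x)) \<le> entropy A" by (rule entropy_ge_sup)
next
  fix e :: "nat \<Rightarrow> 'a" and \<epsilon> :: "nat \<Rightarrow> real"
  assume a: "normalized_schauder_basis e \<and> (\<forall>n. \<epsilon> n \<ge> 0) \<and> compact (brick e \<epsilon>)"
  then have sb: "schauder_basis e" by (simp add: normalized_schauder_basis_def)
  have "entropy (brick e \<epsilon>) \<le> r_unc e \<epsilon>"
    unfolding entropy_def by (rule INF_lower2[of "(e, \<epsilon>)"]) (use a in auto)
  also have "\<dots> \<le> (SUP x\<in>brick e \<epsilon>. ennreal (norm x))"
    by (rule r_unc_le_sup[OF sb]) (use a in auto)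
  finally show "entropy (brick e \<epsilon>) = (SUP x\<in>brick e \<epsilon>. ennreal (norm x))"
    using entropy_ge_sup[of "brick e \<epsilon>"] by (rule antisym)
next
  fix e :: "nat \<Rightarrow> 'a" and \<epsilon> :: "nat \<Rightarrow> real"
  assume a: "normalized_schauder_basis e \<and> one_unconditional e \<and> (\<forall>n. \<epsilon> n \<ge> 0) \<and> compact (brick e \<epsilon>)"
  then have sb: "schauder_basis e" by (simp add: normalized_schauder_basis_def)
  have "unc_entropy (brick e \<epsilon>) \<le> r_unc e \<epsilon>"
    unfolding unc_entropy_def by (rule INF_lower2[of "(e, \<epsilon>)"]) (use a in auto)
  also have "\<dots> \<le> (SUP x\<in>brick e \<epsilon>. ennreal (norm x))"
    by (rule r_unc_le_sup[OF sb]) (use a in auto)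
  finally have 1: "unc_entropy (brick e \<epsilon>) \<le> (SUP x\<in>brick e \<epsilon>. ennreal (norm x))" .
  have "entropy (brick e \<epsilon>) \<le> unc_entropy (brick e \<epsilon>)"
    unfolding entropy_def unc_entropy_def by (intro INF_superset_mono) auto
  then have 2: "(SUP x\<in>brick e \<epsilon>. ennreal (norm x)) \<le> unc_entropy (brick e \<epsilon>)"
    using entropy_ge_sup[of "brick e \<epsilon>"] by (rule order_trans[rotated])
  show "unc_entropy (brick e \<epsilon>) = (SUP x\<in>brick e \<epsilon>. ennreal (norm x))"
    using 1 2 by (rule antisym)
qed

end
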